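(* Let $1\le k<n$, $m=\binom{n}{k}$, and let $\mathbf{A}=(A_1,\ldots,A_n)$ be an $n$-outcome POVM on $\mathbb{C}^d$. Then $\mathbf{A}$ is $k$-outcome-simulable if and only if there exist a probability vector $\vec p=(p_1,\ldots,p_m)$ and positive semidefinite operators $M_{ij}$ ($1\le i\le n$, $1\le j\le m$) such that $\sum_{j}M_{ij}=A_i$ for all $i$, $\sum_i M_{ij}=p_j\mathbb{I}$ for all $j$ (i.e. $\mathbf{M}$ is a joint measurement for the pair $\{\mathbf{A},(p_1\mathbb{I},\ldots,p_m\mathbb{I})\}$), and for every $j$ at least $n-k$ of the operators $M_{1j},\ldots,M_{nj}$ are zero.
   Context: A POVM on $\mathbb{C}^d$ with $n$ outcomes is a tuple $\mathbf{A}=(A_1,\ldots,A_n)$ of positive semidefinite operators with $\sum_a A_a=\mathbb{I}$ (some effects may be zero). Given a set $\mathcal{B}=\{\mathbf{B}^{(j)}\}_j$ of POVMs, a POVM $\mathbf{A}$ with $n$ outcomes is $\mathcal{B}$-simulable if there are a probability distribution $p(j)$ over (finitely many) elements of $\mathcal{B}$ and conditional probability distributions $q(i|j,i')$ (over $i\in\{1,\ldots,n\}$, for each $j$ and each outcome $i'$ of $\mathbf{B}^{(j)}$) such that $A_i=\sum_j p(j)\sum_{i'}q(i|j,i')B^{(j)}_{i'}$ for all $i$. $\mathbf{A}$ is $k$-outcome-simulable if it is $\mathcal{B}$-simulable where $\mathcal{B}$ is the set of all $k$-outcome POVMs on $\mathbb{C}^d$. *)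

theory Defs
  imports "HOL-Analysis.Analysis"
begin

text \<open>Operators on C^d are d x d complex matrices, with d = CARD('d) for a finite type 'd.
  Outcomes of an n-outcome POVM are indexed by 0..<n.\<close>

definition quad_form :: "complex^'d^'d \<Rightarrow> complex^'d \<Rightarrow> complex" where
  "quad_form A v = (\<Sum>i\<in>UNIV. cnj (v $ i) * ((A *v v) $ i))"

definition psd :: "complex^'d^'d \<Rightarrow> bool" where
  "psd A \<longleftrightarrow> (\<forall>v. Im (quad_form A v) = 0 \<and> Re (quad_form A v) \<ge> 0)"

definition povm :: "nat \<Rightarrow> (nat \<Rightarrow> complex^'d^'d) \<Rightarrow> bool" where
  "povm n A \<longleftrightarrow> (\<forall>a<n. psd (A a)) \<and> (\<Sum>a<n. A a) = mat 1"

text \<open>A is k-outcome-simulable: there are finitely many k-outcome POVMs B 0, ..., B (N-1),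
  a probability distribution p over them and classical post-processings q i r i'
  (probability of outcome i given POVM r and its outcome i').\<close>
definition k_outcome_simulable :: "nat \<Rightarrow> nat \<Rightarrow> (nat \<Rightarrow> complex^'d^'d) \<Rightarrow> bool" where
  "k_outcome_simulable k n A \<longleftrightarrow>
     (\<exists>(N::nat) (p::nat \<Rightarrow> real) (B::nat \<Rightarrow> nat \<Rightarrow> complex^'d^'d) (q::nat \<Rightarrow> nat \<Rightarrow> nat \<Rightarrow> real).
        (\<forall>r<N. povm k (B r)) \<and>
        (\<forall>r<N. p r \<ge> 0) \<and> (\<Sum>r<N. p r) = 1 \<and>
        (\<forall>r<N. \<forall>i'<k. (\<forall>i<n. q i r i' \<ge> 0) \<and> (\<Sum>i<n. q i r i') = 1) \<and>
        (\<forall>i<n. A i = (\<Sum>r<N. p r *\<^sub>R (\<Sum>i'<k. q i r i' *\<^sub>R B r i'))))"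

end

theory Submission
  imports Defs "HOL-Library.FuncSet"
begin

lemma qf_add: "quad_form (A + B) v = quad_form A v + quad_form B v"
  unfolding quad_form_def by (simp add: matrix_vector_mult_add_rdistrib distrib_left sum.distrib)

lemma qf_scaleR: "quad_form (c *\<^sub>R A) v = of_real c * quad_form A v"
  unfolding quad_form_def
  apply (simp add: matrix_vector_mult_def sum_distrib_left sum_distrib_right)
  apply (simp add: scaleR_conv_of_real mult_ac)
  done

lemma qf_zero: "quad_form 0 v = 0"
  unfolding quad_form_def by simp

lemma qf_sum: "quad_form (sum f S) v = (\<Sum>x\<in>S. quad_form (f x) v)"
  by (induction S rule: infinite_finite_induct) (auto simp: qf_zero qf_add)

lemma psd_0: "psd 0" unfolding psd_def by (simp add: qf_zero)

lemma psd_add: "psd A \<Longrightarrow> psd B \<Longrightarrow> psd (A + B)"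
  unfolding psd_def by (simp add: qf_add)

lemma psd_scaleR: "psd A \<Longrightarrow> c \<ge> 0 \<Longrightarrow> psd (c *\<^sub>R A)"
  unfolding psd_def by (simp add: qf_scaleR)

lemma psd_sum: "(\<And>x. x \<in> S \<Longrightarrow> psd (f x)) \<Longrightarrow> psd (sum f S)"
  by (induction S rule: infinite_finite_induct) (auto simp: psd_0 psd_add)

lemma sum_two_delta:
  fixes X Y :: "'d::finite \<Rightarrow> 'b::comm_monoid_add"
  assumes "a \<noteq> c"
  shows "(\<Sum>i\<in>UNIV. if i = a then X i else if i = c then Y i else 0) = X a + Y c"
proof -
  have "(\<Sum>i\<in>UNIV. if i = a then X i else if i = c then Y i else 0)
      = (\<Sum>i\<in>UNIV. (if i = a then X i else 0) + (if i = c then Y i else 0))"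
    using assms by (intro sum.cong) auto
  also have "\<dots> = X a + Y c" by (simp add: sum.distrib)
  finally show ?thesis .
qed

lemma qf_two:
  fixes A :: "complex^'d^'d"
  assumes "a \<noteq> c"
  shows "quad_form A (\<chi> i. if i = a then x else if i = c then y else 0)
     = cnj x * (A $ a $ a * x + A $ a $ c * y) + cnj y * (A $ c $ a * x + A $ c $ c * y)"
proof -
  have mv: "(A *v (\<chi> i. if i = a then x else if i = c then y else 0)) $ i = A $ i $ a * x + A $ i $ c * y" for i
  proof -
    have "(A *v (\<chi> i. if i = a then x else if i = c then y else 0)) $ i
        = (\<Sum>j\<in>UNIV. if j = a then A $ i $ j * x else if j = c then A $ i $ j * y else 0)"
      unfolding matrix_vector_mult_def by (auto intro!: sum.cong)
    then show ?thesis using sum_two_delta[OF assms] by simp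
  qed
  have "quad_form A (\<chi> i. if i = a then x else if i = c then y else 0)
     = (\<Sum>i\<in>UNIV. if i = a then cnj x * (A $ i $ a * x + A $ i $ c * y) else if i = c then cnj y * (A $ i $ a * x + A $ i $ c * y) else 0)"
    unfolding quad_form_def mv by (auto intro!: sum.cong)
  then show ?thesis using sum_two_delta[OF assms] by simp
qed

lemma qf_one:
  fixes A :: "complex^'d^'d"
  shows "quad_form A (\<chi> i. if i = a then 1 else 0) = A $ a $ a"
proof -
  have mv: "(A *v (\<chi> i. if i = a then 1 else 0)) $ i = A $ i $ a" for i
    unfolding matrix_vector_mult_def by (simp add: if_distrib[of "\<lambda>x. _ * x"] cong: if_cong)
  show ?thesis unfolding quad_form_def mv by (simp add: if_distrib[of "\<lambda>x. x * _"] if_distrib[of cnj] cong: if_cong)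
qed

lemma qf_zero_imp: 
  fixes A :: "complex^'d^'d"
  assumes "\<And>v. quad_form A v = 0" shows "A = 0"
proof -
  have diag: "A $ a $ a = 0" for a
    using assms[of "\<chi> i. if i = a then 1 else 0"] qf_one[of A a] by simp
  show ?thesis
  proof (rule vec_eq_iff[THEN iffD2], intro allI, rule vec_eq_iff[THEN iffD2], intro allI)
    fix a c
    show "A $ a $ c = 0 $ a $ c"
    proof (cases "a = c")
      case True thus ?thesis using diag by simp
    next
      case False
      have 1: "A $ a $ c + A $ c $ a = 0"
        using qf_two[OF False, of A 1 1] assms diag by simp
      have 2: "\<i> * A $ a $ c - \<i> * A $ c $ a = 0"
        using qf_two[OF False, of A 1 \<i>] assms diag by (simp add: algebra_simps)
      from 2 have "\<i> * (A $ a $ c - A $ c $ a) = 0" by (simp add: algebra_simps)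
      then have "A $ a $ c = A $ c $ a" by simp
      with 1 show ?thesis by simp
    qed
  qed
qed

lemma psd_sum_zero:
  fixes f :: "'a \<Rightarrow> complex^'d^'d"
  assumes "finite S" "\<And>x. x \<in> S \<Longrightarrow> psd (f x)" "sum f S = 0" "x \<in> S"
  shows "f x = 0"
proof (rule qf_zero_imp)
  fix v
  have "(\<Sum>y\<in>S. quad_form (f y) v) = 0" using assms(3) by (simp add: qf_sum[symmetric] qf_zero)
  then have "(\<Sum>y\<in>S. Re (quad_form (f y) v)) = 0" by (metis Re_sum zero_complex.simps(1))
  then have "Re (quad_form (f x) v) = 0"
    using sum_nonneg_eq_0_iff[OF assms(1), of "\<lambda>y. Re (quad_form (f y) v)"] assms psd_def by blast
  moreover have "Im (quad_form (f x) v) = 0" using assms psd_def by blast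
  ultimately show "quad_form (f x) v = 0" by (simp add: complex_eq_iff)
qed

lemma psd_mat1: "psd (mat 1)"
proof -
  have eq: "quad_form (mat 1) v = complex_of_real (\<Sum>i\<in>UNIV. ((Re (v$i))\<^sup>2 + (Im (v$i))\<^sup>2))" for v :: "complex^'d"
    unfolding quad_form_def matrix_vector_mul_lid of_real_sum
    by (intro sum.cong refl) (metis complex_mult_cnj mult.commute)
  show ?thesis unfolding psd_def eq Re_complex_of_real Im_complex_of_real
    by (auto intro: sum_nonneg)
qed

lemma sum_nth_set: "distinct xs \<Longrightarrow> (\<Sum>i<length xs. g (xs!i)) = (\<Sum>x\<in>set xs. g x)"
  by (rule sum.reindex_bij_betw[OF bij_betw_nth]) auto

lemma sum_prefix: "(l::nat) \<le> k \<Longrightarrow> (\<Sum>i<k. if i < l then f i else 0) = (\<Sum>i<l. f i)"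
  by (rule sum.mono_neutral_cong_right) auto

lemma rev_dir:
  fixes k n :: nat and A :: "nat \<Rightarrow> complex^'d^'d" and p :: "nat \<Rightarrow> real" and M :: "nat \<Rightarrow> nat \<Rightarrow> complex^'d^'d"
  assumes k1: "1 \<le> k" and kn: "k < n"
    and p0: "\<forall>j<C. p j \<ge> 0" and p1: "(\<Sum>j<C. p j) = 1"
    and Mpsd: "\<forall>i<n. \<forall>j<C. psd (M i j)"
    and MA: "\<forall>i<n. (\<Sum>j<C. M i j) = A i"
    and Mp: "\<forall>j<C. (\<Sum>i<n. M i j) = p j *\<^sub>R mat 1"
    and Mz: "\<forall>j<C. card {i. i < n \<and> M i j = 0} \<ge> n - k"
  shows "k_outcome_simulable k n A"
proof -
  define S where "S j = {i. i < n \<and> M i j \<noteq> 0}" for j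
  define xs where "xs j = sorted_list_of_set (S j)" for j
  have finS: "finite (S j)" for j unfolding S_def by auto
  have setxs: "set (xs j) = S j" and dxs: "distinct (xs j)" and lenxs: "length (xs j) = card (S j)" for j
    unfolding xs_def using finS by auto
  have cardS: "card (S j) \<le> k" if "j < C" for j
  proof -
    have "{..<n} = S j \<union> {i. i < n \<and> M i j = 0}" "S j \<inter> {i. i < n \<and> M i j = 0} = {}"
      unfolding S_def by auto
    then have "n = card (S j) + card {i. i < n \<and> M i j = 0}"
      by (metis card_Un_disjoint card_lessThan finite_Un finite_lessThan)
    then show ?thesis using Mz[rule_format, OF that] kn by linarith
  qed
  have Sn: "x \<in> S j \<Longrightarrow> x < n" for x j unfolding S_def by auto
  define B where "B j i' = (if p j = 0 then (if i' = 0 then mat 1 else 0)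
      else (if i' < length (xs j) then (1 / p j) *\<^sub>R M (xs j ! i') j else 0))" for j i'
  define q where "q i j i' = (if p j \<noteq> 0 \<and> i' < length (xs j) then (if i = xs j ! i' then 1 else 0)
      else (if i = 0 then 1 else 0 :: real))" for i j i'
  have Mzero: "M i j = 0" if "p j = 0" "i < n" "j < C" for i j
    using psd_sum_zero[of "{..<n}" "\<lambda>i. M i j" i] Mp Mpsd that by auto
  have povmB: "povm k (B j)" if "j < C" for j
  proof -
    have "psd (B j i')" if "i' < k" for i'
    proof -
      have "xs j ! i' < n" if "i' < length (xs j)" using that nth_mem setxs Sn by metis
      then show ?thesis
      unfolding B_def using Mpsd p0 \<open>j < C\<close>
      by (auto intro!: psd_scaleR simp: psd_0 psd_mat1)
    qed
    moreover have "(\<Sum>i'<k. B j i') = mat 1"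
    proof (cases "p j = 0")
      case True
      then show ?thesis using k1 unfolding B_def by (simp add: sum.delta')
    next
      case False
      have "(\<Sum>i'<k. B j i') = (\<Sum>i'<length (xs j). (1 / p j) *\<^sub>R M (xs j ! i') j)"
        unfolding B_def using False sum_prefix[of "length (xs j)" k] cardS[OF that] lenxs by simp
      also have "\<dots> = (\<Sum>x\<in>S j. (1 / p j) *\<^sub>R M x j)"
        using sum_nth_set[OF dxs, of "\<lambda>x. (1 / p j) *\<^sub>R M x j"] setxs by simp
      also have "\<dots> = (\<Sum>x<n. (1 / p j) *\<^sub>R M x j)"
        by (rule sum.mono_neutral_left) (auto simp: S_def)
      also have "\<dots> = mat 1" using Mp that False by (simp add: scaleR_sum_right[symmetric])
      finally show ?thesis .
    qed
    ultimately show ?thesis unfolding povm_def by simp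
  qed
  have qok: "(\<forall>i<n. q i j i' \<ge> 0) \<and> (\<Sum>i<n. q i j i') = 1" if "j < C" "i' < k" for j i'
  proof -
    have "xs j ! i' < n" if "i' < length (xs j)" using that nth_mem setxs Sn by metis
    then show ?thesis unfolding q_def using kn k1
      by (cases "p j \<noteq> 0 \<and> i' < length (xs j)") (auto simp: sum.delta' cong: if_cong)
  qed
  have Aeq: "A i = (\<Sum>j<C. p j *\<^sub>R (\<Sum>i'<k. q i j i' *\<^sub>R B j i'))" if "i < n" for i
  proof -
    have "p j *\<^sub>R (\<Sum>i'<k. q i j i' *\<^sub>R B j i') = M i j" if "j < C" for j
    proof (cases "p j = 0")
      case True
      then show ?thesis using Mzero[OF True \<open>i < n\<close> that] by simp
    next
      case False
      have "(\<Sum>i'<k. q i j i' *\<^sub>R B j i') = (\<Sum>i'<k. if i' < length (xs j) then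
              (if xs j ! i' = i then (1 / p j) *\<^sub>R M (xs j ! i') j else 0) else 0)"
        unfolding q_def B_def using False by (intro sum.cong) auto
      also have "\<dots> = (\<Sum>i'<length (xs j). (if xs j ! i' = i then (1 / p j) *\<^sub>R M (xs j ! i') j else 0))"
        using sum_prefix[of "length (xs j)" k] cardS[OF that] lenxs by simp
      also have "\<dots> = (\<Sum>x\<in>S j. if x = i then (1 / p j) *\<^sub>R M x j else 0)"
        using sum_nth_set[OF dxs, of "\<lambda>x. if x = i then (1 / p j) *\<^sub>R M x j else 0"] setxs by simp
      also have "\<dots> = (1 / p j) *\<^sub>R M i j"
        using finS[of j] \<open>i < n\<close> by (simp add: sum.delta' S_def)
      finally show ?thesis using False by simp
    qed
    then show ?thesis using MA \<open>i < n\<close> by (auto intro!: sum.cong)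
  qed
  show ?thesis unfolding k_outcome_simulable_def
    apply (rule exI[of _ C], rule exI[of _ p], rule exI[of _ B], rule exI[of _ q])
    using povmB p0 p1 qok Aeq by blast
qed

lemma pie_total:
  fixes Q :: "nat \<Rightarrow> nat \<Rightarrow> real"
  assumes "\<forall>x<k. (\<Sum>y<n. Q y x) = 1"
  shows "(\<Sum>f\<in>PiE {..<k} (\<lambda>_. {..<n}). \<Prod>x<k. Q (f x) x) = 1"
  using prod_sum_PiE[of "{..<k}" "\<lambda>_. {..<n}" "\<lambda>x y. Q y x"] assms by simp

lemma pie_marg:
  fixes Q :: "nat \<Rightarrow> nat \<Rightarrow> real"
  assumes "\<forall>x<k. (\<Sum>y<n. Q y x) = 1" "i' < k" "i < n"
  shows "(\<Sum>f\<in>PiE {..<k} (\<lambda>_. {..<n}). if f i' = i then \<Prod>x<k. Q (f x) x else 0) = Q i i'"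
proof -
  define R where "R x y = (if x = i' then (if y = i then Q y x else 0) else Q y x)" for x y
  have "(if f i' = i then \<Prod>x<k. Q (f x) x else 0) = (\<Prod>x<k. R x (f x))" for f
  proof (cases "f i' = i")
    case True then show ?thesis unfolding R_def by (simp, intro prod.cong) auto
  next
    case False then show ?thesis unfolding R_def using assms(2)
      by (subst prod.remove[of _ i']) auto
  qed
  then have "(\<Sum>f\<in>PiE {..<k} (\<lambda>_. {..<n}). if f i' = i then \<Prod>x<k. Q (f x) x else 0)
      = (\<Prod>x<k. \<Sum>y<n. R x y)"
    using prod_sum_PiE[of "{..<k}" "\<lambda>_. {..<n}" R] by simp
  also have "\<dots> = (\<Prod>x<k. if x = i' then Q i i' else 1)"
    using assms unfolding R_def by (intro prod.cong) (auto simp: sum.delta')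
  also have "\<dots> = Q i i'" using assms(2) by simp
  finally show ?thesis .
qed

lemma ksubset_exists:
  assumes "f ` {..<k} \<subseteq> {..<n}" "k \<le> n"
  shows "\<exists>T. T \<subseteq> {..<n} \<and> card T = k \<and> f ` {..<k} \<subseteq> T"
proof -
  let ?I = "f ` {..<k}"
  have ci: "card ?I \<le> k" using card_image_le[of "{..<k}" f] by simp
  have "card ({..<n} - ?I) = n - card ?I" using assms(1) by (simp add: card_Diff_subset finite_subset)
  then have "k - card ?I \<le> card ({..<n} - ?I)" using assms ci by linarith
  then obtain U where U: "U \<subseteq> {..<n} - ?I" "card U = k - card ?I" "finite U"
    by (rule obtain_subset_with_card_n)
  have "card (?I \<union> U) = card ?I + card U"
    using U by (intro card_Un_disjoint) auto
  then show ?thesis using U assms ci by (intro exI[of _ "?I \<union> U"]) auto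
qed

lemma fwd_dir:
  fixes k n :: nat and A :: "nat \<Rightarrow> complex^'d^'d"
  assumes k1: "1 \<le> k" and kn: "k < n" and sim: "k_outcome_simulable k n A"
  shows "\<exists>(p::nat \<Rightarrow> real) (M::nat \<Rightarrow> nat \<Rightarrow> complex^'d^'d).
       (\<forall>j<n choose k. p j \<ge> 0) \<and> (\<Sum>j<n choose k. p j) = 1 \<and>
       (\<forall>i<n. \<forall>j<n choose k. psd (M i j)) \<and>
       (\<forall>i<n. (\<Sum>j<n choose k. M i j) = A i) \<and>
       (\<forall>j<n choose k. (\<Sum>i<n. M i j) = p j *\<^sub>R mat 1) \<and>
       (\<forall>j<n choose k. card {i. i < n \<and> M i j = 0} \<ge> n - k)"
proof -
  obtain N :: nat and p :: "nat \<Rightarrow> real" and B :: "nat \<Rightarrow> nat \<Rightarrow> complex^'d^'d" and q :: "nat \<Rightarrow> nat \<Rightarrow> nat \<Rightarrow> real" where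
    povB: "\<forall>r<N. povm k (B r)" and p0: "\<forall>r<N. p r \<ge> 0" and p1: "(\<Sum>r<N. p r) = 1"
    and qok: "\<forall>r<N. \<forall>i'<k. (\<forall>i<n. q i r i' \<ge> 0) \<and> (\<Sum>i<n. q i r i') = 1"
    and Aeq: "\<forall>i<n. A i = (\<Sum>r<N. p r *\<^sub>R (\<Sum>i'<k. q i r i' *\<^sub>R B r i'))"
    using sim unfolding k_outcome_simulable_def by blast
  define C where "C = n choose k"
  define P where "P = PiE {..<k} (\<lambda>_. {..<n::nat})"
  define Ks where "Ks = {T. T \<subseteq> {..<n::nat} \<and> card T = k}"
  have finP: "finite P" unfolding P_def by (simp add: finite_PiE)
  have cKs: "card Ks = C" unfolding Ks_def C_def using n_subsets[of "{..<n}" k] by simp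
  have finKs: "finite Ks" unfolding Ks_def by simp
  obtain g where g: "bij_betw g {..<C} Ks"
    using ex_bij_betw_nat_finite[OF finKs] cKs atLeast0LessThan by metis
  define T where "T f = (SOME T. T \<in> Ks \<and> f ` {..<k} \<subseteq> T)" for f :: "nat \<Rightarrow> nat"
  have T: "T f \<in> Ks \<and> f ` {..<k} \<subseteq> T f" if "f \<in> P" for f
  proof -
    have "f ` {..<k} \<subseteq> {..<n}" using that unfolding P_def by auto
    then have "\<exists>T. T \<in> Ks \<and> f ` {..<k} \<subseteq> T" using ksubset_exists[of f k n] kn unfolding Ks_def by auto
    then show ?thesis unfolding T_def by (rule someI_ex)
  qed
  define idx where "idx f = inv_into {..<C} g (T f)" for f
  have idx: "idx f < C" "g (idx f) = T f" if "f \<in> P" for f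
    using T[OF that] g unfolding idx_def bij_betw_def
    by (auto intro: inv_into_into f_inv_into_f)
  define w where "w r f = (\<Prod>x<k. q (f x) r x)" for r f
  define F where "F j = {f. f \<in> P \<and> idx f = j}" for j
  have finF: "finite (F j)" for j unfolding F_def using finP by simp
  have wnn: "w r f \<ge> 0" if "r < N" "f \<in> P" for r f
    unfolding w_def using qok that unfolding P_def by (auto intro!: prod_nonneg)
  have wtot: "(\<Sum>f\<in>P. w r f) = 1" if "r < N" for r
    unfolding w_def P_def using pie_total[of k "\<lambda>y x. q y r x" n] qok that by simp
  have wmarg: "(\<Sum>f\<in>P. if f i' = i then w r f else 0) = q i r i'" if "r < N" "i' < k" "i < n" for r i' i
    unfolding w_def P_def using pie_marg[of k "\<lambda>y x. q y r x" n i' i] qok that by simp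
  have grp: "(\<Sum>j<C. \<Sum>f\<in>F j. h f) = (\<Sum>f\<in>P. h f)" for h :: "(nat \<Rightarrow> nat) \<Rightarrow> 'z::comm_monoid_add"
    unfolding F_def using sum.group[OF finP finite_lessThan, where g=idx and h=h] idx by auto
  define pp where "pp j = (\<Sum>r<N. p r * (\<Sum>f\<in>F j. w r f))" for j
  define MM where "MM i j = (\<Sum>r<N. p r *\<^sub>R (\<Sum>f\<in>F j. w r f *\<^sub>R (\<Sum>i'<k. if f i' = i then B r i' else 0)))" for i j
  have FP: "f \<in> P" if "f \<in> F j" for f j using that unfolding F_def by auto
  have c1: "\<forall>j<C. pp j \<ge> 0"
    unfolding pp_def using p0 wnn FP by (auto intro!: sum_nonneg mult_nonneg_nonneg)
  have c2: "(\<Sum>j<C. pp j) = 1"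
  proof -
    have "(\<Sum>j<C. pp j) = (\<Sum>r<N. p r * (\<Sum>j<C. \<Sum>f\<in>F j. w r f))"
      unfolding pp_def by (subst sum.swap) (simp add: sum_distrib_left)
    also have "\<dots> = (\<Sum>r<N. p r)" unfolding grp using wtot by simp
    finally show ?thesis using p1 by simp
  qed
  have Bpsd: "psd (B r i')" if "r < N" "i' < k" for r i' using povB that unfolding povm_def by auto
  have c3: "\<forall>i<n. \<forall>j<C. psd (MM i j)"
    unfolding MM_def using p0 wnn FP Bpsd
    by (auto intro!: psd_sum psd_scaleR simp: psd_0)
  have c4: "\<forall>i<n. (\<Sum>j<C. MM i j) = A i"
  proof (intro allI impI)
    fix i assume i: "i < n"
    have "(\<Sum>j<C. MM i j) = (\<Sum>r<N. p r *\<^sub>R (\<Sum>f\<in>P. w r f *\<^sub>R (\<Sum>i'<k. if f i' = i then B r i' else 0)))"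
      unfolding MM_def by (subst sum.swap) (simp add: scaleR_sum_right[symmetric] grp)
    also have "\<dots> = (\<Sum>r<N. p r *\<^sub>R (\<Sum>i'<k. q i r i' *\<^sub>R B r i'))"
    proof (intro sum.cong refl arg_cong[where f="\<lambda>x. _ *\<^sub>R x"])
      fix r assume r: "r \<in> {..<N}"
      have "(\<Sum>f\<in>P. w r f *\<^sub>R (\<Sum>i'<k. if f i' = i then B r i' else 0))
          = (\<Sum>f\<in>P. \<Sum>i'<k. (if f i' = i then w r f else 0) *\<^sub>R B r i')"
        by (intro sum.cong refl) (simp add: scaleR_sum_right, intro sum.cong refl, simp)
      also have "\<dots> = (\<Sum>i'<k. (\<Sum>f\<in>P. if f i' = i then w r f else 0) *\<^sub>R B r i')"
        by (subst sum.swap) (simp add: scaleR_sum_left)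
      also have "\<dots> = (\<Sum>i'<k. q i r i' *\<^sub>R B r i')"
        using wmarg r i by (intro sum.cong refl) auto
      finally show "(\<Sum>f\<in>P. w r f *\<^sub>R (\<Sum>i'<k. if f i' = i then B r i' else 0)) = (\<Sum>i'<k. q i r i' *\<^sub>R B r i')" .
    qed
    also have "\<dots> = A i" using Aeq i by simp
    finally show "(\<Sum>j<C. MM i j) = A i" .
  qed
  have c5: "\<forall>j<C. (\<Sum>i<n. MM i j) = pp j *\<^sub>R mat 1"
  proof (intro allI impI)
    fix j assume j: "j < C"
    have inner: "(\<Sum>i<n. \<Sum>i'<k. if f i' = i then B r i' else 0) = mat 1" if "f \<in> P" "r < N" for f r
    proof -
      have "(\<Sum>i<n. \<Sum>i'<k. if f i' = i then B r i' else 0) = (\<Sum>i'<k. \<Sum>i<n. if f i' = i then B r i' else 0)"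
        by (rule sum.swap)
      also have "\<dots> = (\<Sum>i'<k. B r i')"
        using \<open>f \<in> P\<close> unfolding P_def by (intro sum.cong refl) (auto simp: sum.delta)
      also have "\<dots> = mat 1" using povB that unfolding povm_def by auto
      finally show ?thesis .
    qed
    have "(\<Sum>i<n. MM i j) = (\<Sum>r<N. p r *\<^sub>R (\<Sum>f\<in>F j. w r f *\<^sub>R (\<Sum>i<n. \<Sum>i'<k. if f i' = i then B r i' else 0)))"
      unfolding MM_def
      apply (subst sum.swap)
      apply (simp add: scaleR_sum_right[symmetric])
      apply (intro sum.cong refl arg_cong[where f="\<lambda>x. _ *\<^sub>R x"])
      apply (subst sum.swap)
      apply (simp add: scaleR_sum_right[symmetric])
      done
    also have "\<dots> = (\<Sum>r<N. p r *\<^sub>R (\<Sum>f\<in>F j. w r f *\<^sub>R mat 1))"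
      using inner FP by (intro sum.cong refl arg_cong[where f="\<lambda>x. _ *\<^sub>R x"]) auto
    also have "\<dots> = pp j *\<^sub>R mat 1"
      unfolding pp_def by (simp add: scaleR_sum_left[symmetric] sum_distrib_left)
    finally show "(\<Sum>i<n. MM i j) = pp j *\<^sub>R mat 1" .
  qed
  have c6: "\<forall>j<C. card {i. i < n \<and> MM i j = 0} \<ge> n - k"
  proof (intro allI impI)
    fix j assume j: "j < C"
    have gj: "g j \<in> Ks" using g j unfolding bij_betw_def by auto
    have sub: "{..<n} - g j \<subseteq> {i. i < n \<and> MM i j = 0}"
    proof
      fix i assume i: "i \<in> {..<n} - g j"
      have "f i' \<noteq> i" if "f \<in> F j" "i' < k" for f i'
      proof -
        have "f ` {..<k} \<subseteq> g j" using T[OF FP[OF that(1)]] idx(2)[OF FP[OF that(1)]] that(1)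
          unfolding F_def by auto
        then show ?thesis using i that(2) by auto
      qed
      then have "MM i j = 0" unfolding MM_def by simp
      then show "i \<in> {i. i < n \<and> MM i j = 0}" using i by simp
    qed
    have "card ({..<n} - g j) = n - k" using gj unfolding Ks_def by (metis (mono_tags, lifting) card_Diff_subset card_lessThan finite_subset finite_lessThan mem_Collect_eq)
    then show "card {i. i < n \<and> MM i j = 0} \<ge> n - k"
      using card_mono[OF _ sub] by simp
  qed
  show ?thesis unfolding C_def[symmetric]
    by (intro exI[of _ pp] exI[of _ MM]) (use c1 c2 c3 c4 c5 c6 in blast)
qed

theorem proposition2:
  fixes k n :: nat and A :: "nat \<Rightarrow> complex^'d^'d"
  assumes "1 \<le> k" and "k < n" and "povm n A"
  shows "k_outcome_simulable k n A \<longleftrightarrow>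
    (\<exists>(p::nat \<Rightarrow> real) (M::nat \<Rightarrow> nat \<Rightarrow> complex^'d^'d).
       (\<forall>j<n choose k. p j \<ge> 0) \<and> (\<Sum>j<n choose k. p j) = 1 \<and>
       (\<forall>i<n. \<forall>j<n choose k. psd (M i j)) \<and>
       (\<forall>i<n. (\<Sum>j<n choose k. M i j) = A i) \<and>
       (\<forall>j<n choose k. (\<Sum>i<n. M i j) = p j *\<^sub>R mat 1) \<and>
       (\<forall>j<n choose k. card {i. i < n \<and> M i j = 0} \<ge> n - k))"
  using rev_dir[OF assms(1,2), of "n choose k"] fwd_dir[OF assms(1,2)] by blast

end
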